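(* Let $G$ be a weakly-reversible chemical reaction network and $U_G$ the network obtained by making every reaction reversible. Then $U_G$ and $G$ have the same siphons, and the same critical siphons.
   Context: A chemical reaction network (CRN) consists of positive integers $s,n$, a finite directed graph $G$ with vertex set $\{1,\dots,n\}$ and edge set $E(G)$, and an injective labeling of vertex $i$ by a monic monomial $\psi_i=\prod_{j=1}^s x_j^{y_{ij}}$, $y_i=(y_{i1},\dots,y_{is})$. $G$ is weakly-reversible iff each connected component is strongly connected. $U_G$ is the CRN with the same vertices and labeling and edge set $\{(i,j) : (i,j)\in E(G)\text{ or }(j,i)\in E(G)\}$. The stoichiometric subspace of a CRN is the span of $\{y_i-y_j:(i,j)\text{ an edge}\}$, and for $x\in\mathbb{R}^s_{\ge0}$ the invariant polyhedron containing $x$ is $(x+S)\cap\mathbb{R}^s_{\ge0}$. A nonempty $Z\subseteq\{1,\dots,s\}$ is a siphon iff for every edge $(i,j)$, if $x_k\mid\psi_j$ for some $k\in Z$ then $x_l\mid\psi_i$ for some $l\in Z$. A siphon $Z$ is critical iff there is $z\in\mathbb{R}^s_{\ge0}$ with $Z=\{i:z_i=0\}$ such that the invariant polyhedron containing $z$ meets $\mathbb{R}^s_{>0}$. *)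

theory Defs
  imports "HOL-Analysis.Analysis"
begin

text \<open>A CRN: s species (indices 1..s), n complexes (vertices 1..n), edge set E,
  and exponent vectors y i k (exponent of x_k in the monomial labelling vertex i).
  Injectivity of the monomial labelling = distinct exponent vectors on 1..s.\<close>

definition crn :: "nat \<Rightarrow> nat \<Rightarrow> (nat \<times> nat) set \<Rightarrow> (nat \<Rightarrow> nat \<Rightarrow> nat) \<Rightarrow> bool" where
  "crn s n E y \<longleftrightarrow> 0 < s \<and> 0 < n \<and> E \<subseteq> {1..n} \<times> {1..n} \<and>
     (\<forall>i\<in>{1..n}. \<forall>j\<in>{1..n}. i \<noteq> j \<longrightarrow> (\<exists>k\<in>{1..s}. y i k \<noteq> y j k))"

definition weakly_reversible :: "nat \<Rightarrow> (nat \<times> nat) set \<Rightarrow> bool" where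
  "weakly_reversible n E \<longleftrightarrow>
     (\<forall>u\<in>{1..n}. \<forall>v\<in>{1..n}. (u, v) \<in> (E \<union> E\<inverse>)\<^sup>* \<longrightarrow> (u, v) \<in> E\<^sup>* \<and> (v, u) \<in> E\<^sup>*)"

definition undirect :: "(nat \<times> nat) set \<Rightarrow> (nat \<times> nat) set" where
  "undirect E = {(i, j). (i, j) \<in> E \<or> (j, i) \<in> E}"

text \<open>Stoichiometric subspace: the span of the vectors y_i - y_j, (i,j) an edge
  (E is finite, so the span is the set of linear combinations indexed by E).
  Vectors in R^s are functions nat => real, only coordinates 1..s are relevant.\<close>
definition stoich_space :: "(nat \<times> nat) set \<Rightarrow> (nat \<Rightarrow> nat \<Rightarrow> nat) \<Rightarrow> (nat \<Rightarrow> real) set" where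
  "stoich_space E y = {(\<lambda>k. \<Sum>e\<in>E. c e * (real (y (fst e) k) - real (y (snd e) k))) | c. True}"

definition siphon :: "nat \<Rightarrow> (nat \<times> nat) set \<Rightarrow> (nat \<Rightarrow> nat \<Rightarrow> nat) \<Rightarrow> nat set \<Rightarrow> bool" where
  "siphon s E y Z \<longleftrightarrow> Z \<noteq> {} \<and> Z \<subseteq> {1..s} \<and>
     (\<forall>(i, j)\<in>E. (\<exists>k\<in>Z. 0 < y j k) \<longrightarrow> (\<exists>l\<in>Z. 0 < y i l))"

definition critical_siphon :: "nat \<Rightarrow> (nat \<times> nat) set \<Rightarrow> (nat \<Rightarrow> nat \<Rightarrow> nat) \<Rightarrow> nat set \<Rightarrow> bool" where
  "critical_siphon s E y Z \<longleftrightarrow> siphon s E y Z \<and>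
     (\<exists>z :: nat \<Rightarrow> real. (\<forall>k\<in>{1..s}. 0 \<le> z k) \<and> Z = {k\<in>{1..s}. z k = 0} \<and>
        (\<exists>x v. v \<in> stoich_space E y \<and> (\<forall>k\<in>{1..s}. x k = z k + v k \<and> 0 < x k)))"

end

theory Submission
  imports Defs
begin

definition lsp :: "('a \<Rightarrow> nat \<Rightarrow> real) \<Rightarrow> 'a set \<Rightarrow> (nat \<Rightarrow> real) set" where
  "lsp D A = {(\<lambda>k. \<Sum>e\<in>A. c e * D e k) | c. True}"

lemma lspI: "u = (\<lambda>k. \<Sum>e\<in>A. c e * D e k) \<Longrightarrow> u \<in> lsp D A"
  unfolding lsp_def by blast

lemma lspE: "u \<in> lsp D A \<Longrightarrow> (\<And>c. u = (\<lambda>k. \<Sum>e\<in>A. c e * D e k) \<Longrightarrow> P) \<Longrightarrow> P"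
  unfolding lsp_def by blast

lemma lsp_add: "u \<in> lsp D A \<Longrightarrow> v \<in> lsp D A \<Longrightarrow> (\<lambda>k. u k + v k) \<in> lsp D A"
proof -
  assume "u \<in> lsp D A" "v \<in> lsp D A"
  then obtain c1 c2 where "u = (\<lambda>k. \<Sum>e\<in>A. c1 e * D e k)" "v = (\<lambda>k. \<Sum>e\<in>A. c2 e * D e k)"
    by (metis lspE)
  then show ?thesis
    by (intro lspI[where c="\<lambda>e. c1 e + c2 e"]) (simp add: sum.distrib distrib_right)
qed

lemma lsp_scale: "u \<in> lsp D A \<Longrightarrow> (\<lambda>k. a * u k) \<in> lsp D A"
proof -
  assume "u \<in> lsp D A"
  then obtain c1 where "u = (\<lambda>k. \<Sum>e\<in>A. c1 e * D e k)"
    by (metis lspE)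
  then show ?thesis
    by (intro lspI[where c="\<lambda>e. a * c1 e"]) (simp add: sum_distrib_left mult.assoc)
qed

lemma lsp_zero: "(\<lambda>k. 0) \<in> lsp D A"
  by (rule lspI[where c="\<lambda>e. 0"]) simp

lemma lsp_gen: "finite A \<Longrightarrow> e0 \<in> A \<Longrightarrow> D e0 \<in> lsp D A"
proof -
  assume "finite A" "e0 \<in> A"
  have "(\<Sum>e\<in>A. (if e = e0 then 1 else 0) * D e k) = (\<Sum>e\<in>A. if e = e0 then D e k else 0)" for k
    by (rule sum.cong) auto
  also have "\<dots> k = D e0 k" for k using \<open>finite A\<close> \<open>e0 \<in> A\<close> by (simp add: sum.delta')
  finally show ?thesis
    by (intro lspI[where c="\<lambda>e. if e = e0 then 1 else 0"]) (simp add: fun_eq_iff)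
qed

lemma lsp_sum:
  assumes "finite B" "\<forall>e\<in>B. f e \<in> lsp D A"
  shows "(\<lambda>k. \<Sum>e\<in>B. c e * f e k) \<in> lsp D A"
  using assms
proof (induction B rule: finite_induct)
  case empty
  then show ?case using lsp_zero by simp
next
  case (insert x F)
  have "(\<lambda>k. c x * f x k + (\<Sum>e\<in>F. c e * f e k)) \<in> lsp D A"
    using lsp_add[OF lsp_scale[of "f x" D A "c x"] insert.IH] insert.prems by auto
  then show ?case using insert.hyps by simp
qed

lemma path_back:
  assumes "(j, i) \<in> E\<^sup>*"
    and sip: "\<forall>(a, b)\<in>E. (\<exists>k\<in>Z. 0 < y b k) \<longrightarrow> (\<exists>l\<in>Z. 0 < y a l)"
    and "\<exists>k\<in>Z. 0 < (y::nat\<Rightarrow>nat\<Rightarrow>nat) i k"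
  shows "\<exists>l\<in>Z. 0 < y j l"
  using assms(1,3)
proof (induction rule: converse_rtrancl_induct)
  case base
  then show ?case by simp
next
  case (step a b)
  then show ?case using sip by blast
qed

theorem lemma4p4:
  fixes s n :: nat and E :: "(nat \<times> nat) set" and y :: "nat \<Rightarrow> nat \<Rightarrow> nat"
  assumes "crn s n E y" and "weakly_reversible n E"
  shows "(\<forall>Z. siphon s (undirect E) y Z \<longleftrightarrow> siphon s E y Z) \<and>
         (\<forall>Z. critical_siphon s (undirect E) y Z \<longleftrightarrow> critical_siphon s E y Z)"
proof -
  have Esub: "E \<subseteq> {1..n} \<times> {1..n}" using assms(1) unfolding crn_def by blast
  have finE: "finite E" using Esub finite_subset by blast
  have U: "undirect E = E \<union> E\<inverse>" unfolding undirect_def by auto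
  have finU: "finite (undirect E)" using finE U by simp
  have sip: "siphon s (undirect E) y Z \<longleftrightarrow> siphon s E y Z" for Z
  proof
    assume "siphon s (undirect E) y Z" then show "siphon s E y Z"
      unfolding siphon_def U by blast
  next
    assume S: "siphon s E y Z"
    have "(\<exists>k\<in>Z. 0 < y j k) \<longrightarrow> (\<exists>l\<in>Z. 0 < y i l)" if "(i, j) \<in> undirect E" for i j
    proof (cases "(i, j) \<in> E")
      case True then show ?thesis using S unfolding siphon_def by blast
    next
      case False
      then have ji: "(j, i) \<in> E" using that U by auto
      then have "i \<in> {1..n}" "j \<in> {1..n}" using Esub by auto
      moreover have "(j, i) \<in> (E \<union> E\<inverse>)\<^sup>*" using ji by auto
      ultimately have "(i, j) \<in> E\<^sup>*" using assms(2) unfolding weakly_reversible_def by blast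
      moreover have "\<forall>(a, b)\<in>E. (\<exists>k\<in>Z. 0 < y b k) \<longrightarrow> (\<exists>l\<in>Z. 0 < y a l)"
        using S unfolding siphon_def by simp
      ultimately show ?thesis using path_back[of i j E Z y] by blast
    qed
    then show "siphon s (undirect E) y Z" using S unfolding siphon_def by auto
  qed
  define D where "D = (\<lambda>(e::nat\<times>nat) k. real (y (fst e) k) - real (y (snd e) k))"
  have st: "stoich_space A y = lsp D A" for A
    unfolding stoich_space_def lsp_def D_def by simp
  have eqS: "stoich_space (undirect E) y = stoich_space E y"
  proof
    show "stoich_space (undirect E) y \<subseteq> stoich_space E y"
    proof
      fix v assume "v \<in> stoich_space (undirect E) y"
      then obtain c where v: "v = (\<lambda>k. \<Sum>e\<in>undirect E. c e * D e k)"
        unfolding st by (rule lspE)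
      have "\<forall>e\<in>undirect E. D e \<in> lsp D E"
      proof
        fix e assume "e \<in> undirect E"
        then show "D e \<in> lsp D E"
        proof (cases "e \<in> E")
          case True then show ?thesis by (rule lsp_gen[OF finE])
        next
          case False
          then have "prod.swap e \<in> E" using \<open>e \<in> undirect E\<close> U by (cases e) auto
          then have "(\<lambda>k. (-1) * D (prod.swap e) k) \<in> lsp D E" by (rule lsp_scale[OF lsp_gen[OF finE]])
          moreover have "(\<lambda>k. (-1) * D (prod.swap e) k) = D e"
            unfolding D_def by (cases e) auto
          ultimately show ?thesis by simp
        qed
      qed
      then show "v \<in> stoich_space E y" unfolding st v by (rule lsp_sum[OF finU])
    qed
  next
    show "stoich_space E y \<subseteq> stoich_space (undirect E) y"
    proof
      fix v assume "v \<in> stoich_space E y"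
      then obtain c where v: "v = (\<lambda>k. \<Sum>e\<in>E. c e * D e k)"
        unfolding st by (rule lspE)
      have "\<forall>e\<in>E. D e \<in> lsp D (undirect E)" using lsp_gen[OF finU] U by simp
      then show "v \<in> stoich_space (undirect E) y" unfolding st v by (rule lsp_sum[OF finE])
    qed
  qed
  show ?thesis
    using sip eqS unfolding critical_siphon_def by simp
qed

end
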